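(* Five distinct points $q_1,\dots,q_5\in\widehat{\mathbb H}$ lie on a single 2-sphere or a 2-plane if and only if $Q(q_1,q_2,q_3,q_4)$ and $Q(q_1,q_2,q_3,q_5)$ commute with each other.
   Context: $\mathbb H$ denotes the quaternions (identified with $\mathbb R^4$), $\widehat{\mathbb H}=\mathbb H\cup\{\infty\}$. For four distinct points of $\widehat{\mathbb H}$ the cross-ratio is $Q(q_1,q_2,q_3,q_4)=(q_2-q_1)^{-1}(q_4-q_1)(q_4-q_3)^{-1}(q_2-q_3)\in\mathbb H$, defined by taking limits if some $q_n=\infty$. *)

theory Defs
  imports "HOL-Analysis.Analysis"
begin

text \<open>Quaternions are identified with real^4: component 1 is the real part,
components 2,3,4 are the i, j, k parts.  Points of the extended space
H-hat are values of type real^4 option, where None is the point at infinity.\<close>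

type_synonym quat = "real^4"

definition qmul :: "quat \<Rightarrow> quat \<Rightarrow> quat" where
  "qmul a b = vector
     [a$1*b$1 - a$2*b$2 - a$3*b$3 - a$4*b$4,
      a$1*b$2 + a$2*b$1 + a$3*b$4 - a$4*b$3,
      a$1*b$3 - a$2*b$4 + a$3*b$1 + a$4*b$2,
      a$1*b$4 + a$2*b$3 - a$3*b$2 + a$4*b$1]"

definition qcnj :: "quat \<Rightarrow> quat" where
  "qcnj a = vector [a$1, - a$2, - a$3, - a$4]"

definition qinv :: "quat \<Rightarrow> quat" where
  "qinv a = (1 / (norm a)^2) *\<^sub>R qcnj a"

definition cross_ratio :: "quat \<Rightarrow> quat \<Rightarrow> quat \<Rightarrow> quat \<Rightarrow> quat" where
  "cross_ratio q1 q2 q3 q4 =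
     qmul (qmul (qmul (qinv (q2 - q1)) (q4 - q1)) (qinv (q4 - q3))) (q2 - q3)"

text \<open>Extension to H-hat by limits (for distinct points at most one is infinite).
  For q2 = infinity the limit is taken along the positive real axis
  (the general limit only exists up to conjugation).\<close>
definition cross_ratio_ext ::
  "quat option \<Rightarrow> quat option \<Rightarrow> quat option \<Rightarrow> quat option \<Rightarrow> quat" where
  "cross_ratio_ext p1 p2 p3 p4 =
     (if p1 = None then qmul (qinv (the p4 - the p3)) (the p2 - the p3)
      else if p2 = None then qmul (the p4 - the p1) (qinv (the p4 - the p3))
      else if p3 = None then qmul (qinv (the p2 - the p1)) (the p4 - the p1)
      else if p4 = None then qmul (qinv (the p2 - the p1)) (the p2 - the p3)
      else cross_ratio (the p1) (the p2) (the p3) (the p4))"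

definition is_2plane :: "quat set \<Rightarrow> bool" where
  "is_2plane P \<longleftrightarrow> affine P \<and> aff_dim P = 2"

definition is_2sphere :: "quat set \<Rightarrow> bool" where
  "is_2sphere S \<longleftrightarrow> (\<exists>A c r. affine A \<and> aff_dim A = 3 \<and> c \<in> A \<and> r > 0 \<and>
                               S = A \<inter> sphere c r)"

definition on_2sphere_or_2plane :: "quat option set \<Rightarrow> bool" where
  "on_2sphere_or_2plane X \<longleftrightarrow>
     (\<exists>S. is_2sphere S \<and> (\<forall>p\<in>X. p \<noteq> None \<and> the p \<in> S)) \<or>
     (\<exists>P. is_2plane P \<and> (\<forall>p\<in>X. p = None \<or> the p \<in> P))"

end

theory Submission
  imports Defs
begin

lemma v4 [simp]:
 "(vector [x,y,z,w] ::real^4)$1 = x"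
 "(vector [x,y,z,w] ::real^4)$2 = y"
 "(vector [x,y,z,w] ::real^4)$3 = z"
 "(vector [x,y,z,w] ::real^4)$4 = w"
  unfolding vector_def by simp_all

lemma quat_eq_iff: "(x::quat) = y \<longleftrightarrow> x$1=y$1 \<and> x$2=y$2 \<and> x$3=y$3 \<and> x$4=y$4"
  by (simp add: vec_eq_iff forall_4)

definition qone :: quat where "qone = vector [1,0,0,0]"

lemma qone_c [simp]: "qone$1 = 1" "qone$2 = 0" "qone$3 = 0" "qone$4 = 0"
  by (simp_all add: qone_def)

lemma qmul_c [simp]:
  "qmul a b $1 = a$1*b$1 - a$2*b$2 - a$3*b$3 - a$4*b$4"
  "qmul a b $2 = a$1*b$2 + a$2*b$1 + a$3*b$4 - a$4*b$3"
  "qmul a b $3 = a$1*b$3 - a$2*b$4 + a$3*b$1 + a$4*b$2"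
  "qmul a b $4 = a$1*b$4 + a$2*b$3 - a$3*b$2 + a$4*b$1"
  by (simp_all add: qmul_def)

lemma qcnj_c [simp]: "qcnj a $1 = a$1" "qcnj a $2 = - a$2" "qcnj a $3 = - a$3" "qcnj a $4 = - a$4"
  by (simp_all add: qcnj_def)

lemma nsq: "(norm (a::quat))^2 = a$1^2 + a$2^2 + a$3^2 + a$4^2"
  unfolding power2_norm_eq_inner inner_vec_def sum_4 by (simp add: power2_eq_square)

lemma qmul_assoc: "qmul (qmul a b) c = qmul a (qmul b c)"
  by (simp add: quat_eq_iff algebra_simps)

lemma qmul_add_left: "qmul (a + b) c = qmul a c + qmul b c"
  by (simp add: quat_eq_iff algebra_simps)
lemma qmul_add_right: "qmul c (a + b) = qmul c a + qmul c b"
  by (simp add: quat_eq_iff algebra_simps)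
lemma qmul_diff_left: "qmul (a - b) c = qmul a c - qmul b c"
  by (simp add: quat_eq_iff algebra_simps)
lemma qmul_diff_right: "qmul c (a - b) = qmul c a - qmul c b"
  by (simp add: quat_eq_iff algebra_simps)
lemma qmul_scaleR_left: "qmul (r *\<^sub>R a) c = r *\<^sub>R qmul a c"
  by (simp add: quat_eq_iff algebra_simps)
lemma qmul_scaleR_right: "qmul c (r *\<^sub>R a) = r *\<^sub>R qmul c a"
  by (simp add: quat_eq_iff algebra_simps)
lemma qmul_one_left [simp]: "qmul qone a = a"
  by (simp add: quat_eq_iff)
lemma qmul_one_right [simp]: "qmul a qone = a"
  by (simp add: quat_eq_iff)
lemma qmul_zero [simp]: "qmul 0 a = 0" "qmul a 0 = 0"
  by (simp_all add: quat_eq_iff)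

lemma qcnj_add: "qcnj (a + b) = qcnj a + qcnj b" by (simp add: quat_eq_iff)
lemma qcnj_diff: "qcnj (a - b) = qcnj a - qcnj b" by (simp add: quat_eq_iff)
lemma qcnj_scaleR: "qcnj (r *\<^sub>R a) = r *\<^sub>R qcnj a" by (simp add: quat_eq_iff)
lemma qcnj_minus: "qcnj (- a) = - qcnj a" by (simp add: quat_eq_iff)
lemma qmul_minus_left: "qmul (- a) c = - qmul a c" by (simp add: quat_eq_iff)
lemma qcnj_qcnj [simp]: "qcnj (qcnj a) = a" by (simp add: quat_eq_iff)
lemma qcnj_inj: "qcnj a = qcnj b \<longleftrightarrow> a = b" by (metis qcnj_qcnj)
lemma qcnj_zero [simp]: "qcnj 0 = 0" by (simp add: quat_eq_iff)

lemma qmul_cnj_right: "qmul a (qcnj a) = (norm a)^2 *\<^sub>R qone"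
  unfolding quat_eq_iff nsq by (simp add: algebra_simps power2_eq_square)
lemma qmul_cnj_left: "qmul (qcnj a) a = (norm a)^2 *\<^sub>R qone"
  unfolding quat_eq_iff nsq by (simp add: algebra_simps power2_eq_square)

lemma qinv_right: "a \<noteq> 0 \<Longrightarrow> qmul a (qinv a) = qone"
  by (simp add: qinv_def qmul_scaleR_right qmul_cnj_right)
lemma qinv_left: "a \<noteq> 0 \<Longrightarrow> qmul (qinv a) a = qone"
  by (simp add: qinv_def qmul_scaleR_left qmul_cnj_left)
lemma qinv_nz: "a \<noteq> 0 \<Longrightarrow> qinv a \<noteq> 0"
  using qinv_right by (metis qmul_zero(2) qone_c(1) zero_index zero_neq_one)
lemma qinv_unique: "qmul a b = qone \<Longrightarrow> b = qinv a"
proof -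
  assume h: "qmul a b = qone"
  have "a \<noteq> 0" using h by (metis qmul_zero(1) qone_c(1) zero_index zero_neq_one)
  have "qinv a = qmul (qinv a) (qmul a b)" using h by simp
  also have "\<dots> = b" by (simp add: qmul_assoc[symmetric] qinv_left[OF \<open>a\<noteq>0\<close>])
  finally show ?thesis by simp
qed
lemma qinv_qinv: "a \<noteq> 0 \<Longrightarrow> qinv (qinv a) = a"
  by (metis qinv_left qinv_unique)

definition comm :: "quat \<Rightarrow> quat \<Rightarrow> bool" where "comm x y \<longleftrightarrow> qmul x y = qmul y x"

lemma comm_sym: "comm x y \<longleftrightarrow> comm y x" by (auto simp: comm_def)

lemma comm_c: "comm x y \<longleftrightarrow> x$3*y$4 = x$4*y$3 \<and> x$4*y$2 = x$2*y$4 \<and> x$2*y$3 = x$3*y$2"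
  by (simp add: comm_def quat_eq_iff algebra_simps)

lemma nsq_pos: "(a::quat) \<noteq> 0 \<Longrightarrow> (norm a)^2 > 0" by simp

lemma comm_shift: "comm (x + r *\<^sub>R qone) y \<longleftrightarrow> comm x y"
  by (simp add: comm_c)
lemma comm_scale: "s \<noteq> 0 \<Longrightarrow> comm (s *\<^sub>R x) y \<longleftrightarrow> comm x y"
  by (simp add: comm_c mult.assoc)
lemma comm_qinv: "x \<noteq> 0 \<Longrightarrow> comm (qinv x) y \<longleftrightarrow> comm x y"
proof -
  assume "x \<noteq> 0"
  then have "(1 / (norm x)^2) \<noteq> 0" by simp
  then have "comm (qinv x) y \<longleftrightarrow> comm (qcnj x) y" unfolding qinv_def by (rule comm_scale)
  also have "\<dots> \<longleftrightarrow> comm x y" by (simp add: comm_c)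
  finally show ?thesis .
qed
lemma comm_real: "comm (r *\<^sub>R qone) y" by (simp add: comm_c)
lemma comm_lin: "comm x (k *\<^sub>R x + r *\<^sub>R qone)" by (simp add: comm_c)

lemma qmul_cancel_left: "g \<noteq> 0 \<Longrightarrow> qmul g a = qmul g b \<Longrightarrow> a = b"
  by (metis qinv_left qmul_assoc qmul_one_left)
lemma qmul_cancel_right: "g \<noteq> 0 \<Longrightarrow> qmul a g = qmul b g \<Longrightarrow> a = b"
  by (metis qinv_right qmul_assoc qmul_one_right)

lemma comm_conj: "g \<noteq> 0 \<Longrightarrow> comm (qmul (qmul g x) (qinv g)) (qmul (qmul g y) (qinv g)) \<longleftrightarrow> comm x y"
proof -
  assume g: "g \<noteq> 0"
  have e: "qmul (qmul (qmul g u) (qinv g)) (qmul (qmul g v) (qinv g)) = qmul (qmul g (qmul u v)) (qinv g)" for u v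
    by (simp add: qmul_assoc qinv_left[OF g] flip: qmul_assoc[of "qinv g" g])
  have "(qmul (qmul g (qmul x y)) (qinv g) = qmul (qmul g (qmul y x)) (qinv g)) \<longleftrightarrow> qmul x y = qmul y x"
    using qmul_cancel_left[OF g] qmul_cancel_right[OF qinv_nz[OF g]] by metis
  then show ?thesis unfolding comm_def e .
qed

lemma comm_mul: "a \<noteq> 0 \<Longrightarrow> comm a (qmul b a) \<longleftrightarrow> comm a b"
  unfolding comm_def using qmul_cancel_right[of a] by (metis qmul_assoc)

lemma real_part: "x$2 = 0 \<Longrightarrow> x$3 = 0 \<Longrightarrow> x$4 = 0 \<Longrightarrow> x = x$1 *\<^sub>R qone"
  by (simp add: quat_eq_iff)

lemma solve_cnj: assumes a: "a \<noteq> 0" and h: "qmul (qcnj z) a = s *\<^sub>R qone"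
  shows "z = (s / (norm a)^2) *\<^sub>R a"
proof -
  have "qcnj z = qmul (qcnj z) (qmul a (qinv a))" by (simp add: qinv_right[OF a])
  also have "\<dots> = s *\<^sub>R qinv a" by (simp add: h flip: qmul_assoc add: qmul_scaleR_left)
  also have "\<dots> = qcnj ((s / (norm a)^2) *\<^sub>R a)" by (simp add: qinv_def qcnj_scaleR)
  finally show ?thesis by (simp add: qcnj_inj)
qed

lemma parallel3: assumes "\<not> (x2 = 0 \<and> x3 = 0 \<and> x4 = (0::real))"
  and "x3*y4 = x4*y3" "x4*y2 = x2*y4" "x2*y3 = x3*y2"
  shows "\<exists>t. y2 = t*x2 \<and> y3 = t*x3 \<and> y4 = t*x4"
proof -
  consider "x2 \<noteq> 0" | "x3 \<noteq> 0" | "x4 \<noteq> 0" using assms(1) by blast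
  then show ?thesis
  proof cases
    case 1 then show ?thesis using assms by (intro exI[of _ "y2/x2"]) (auto simp: field_simps)
  next
    case 2 then show ?thesis using assms by (intro exI[of _ "y3/x3"]) (auto simp: field_simps)
  next
    case 3 then show ?thesis using assms by (intro exI[of _ "y4/x4"]) (auto simp: field_simps)
  qed
qed

lemma solve_lin: assumes "(l::real) *\<^sub>R (a::'a::real_vector) + m *\<^sub>R b + n *\<^sub>R c = 0" "n \<noteq> 0"
  shows "c = (- l / n) *\<^sub>R a + (- m / n) *\<^sub>R b"
proof -
  have h: "n *\<^sub>R c = - (l *\<^sub>R a) - m *\<^sub>R b" using assms(1)
    by (metis add.commute add_implies_diff diff_0 diff_diff_eq)
  have "c = (1/n) *\<^sub>R (n *\<^sub>R c)" using assms(2) by simp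
  also have "\<dots> = (1/n) *\<^sub>R (- (l *\<^sub>R a) - m *\<^sub>R b)" by (simp only: h)
  finally show ?thesis by (simp add: scaleR_diff_right)
qed

definition Dep :: "quat \<Rightarrow> quat \<Rightarrow> quat \<Rightarrow> bool" where
  "Dep a b c \<longleftrightarrow> (\<exists>l m n. (l \<noteq> 0 \<or> m \<noteq> 0 \<or> n \<noteq> 0) \<and> l *\<^sub>R a + m *\<^sub>R b + n *\<^sub>R c = 0)"

lemma core_cnj:
  assumes a: "a \<noteq> 0"
  shows "comm (qmul (qcnj b) a) (qmul (qcnj c) a) \<longleftrightarrow> Dep a b c"
proof
  assume D: "Dep a b c"
  then obtain l m n where nz: "l \<noteq> 0 \<or> m \<noteq> 0 \<or> n \<noteq> 0" and e: "l *\<^sub>R a + m *\<^sub>R b + n *\<^sub>R c = 0"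
    unfolding Dep_def by blast
  show "comm (qmul (qcnj b) a) (qmul (qcnj c) a)"
  proof (cases "n = 0")
    case False
    have "c = (- l / n) *\<^sub>R a + (- m / n) *\<^sub>R b" by (rule solve_lin[OF e False])
    then have "qmul (qcnj c) a = (- m / n) *\<^sub>R qmul (qcnj b) a + ((- l / n) * (norm a)^2) *\<^sub>R qone"
      by (simp add: qcnj_diff qcnj_minus qcnj_scaleR qmul_diff_left qmul_minus_left qmul_scaleR_left qmul_cnj_left)
    then have "qmul (qcnj c) a = (- m / n) *\<^sub>R qmul (qcnj b) a + (- (l * (norm a)^2 / n)) *\<^sub>R qone"
      by simp
    then show ?thesis by (simp only: comm_lin)
  next
    case True
    then have m: "m \<noteq> 0" using nz e a by auto
    have "l *\<^sub>R a + 0 *\<^sub>R a + m *\<^sub>R b = 0" using e True by simp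
    from solve_lin[OF this m] have "b = (- l / m) *\<^sub>R a" by simp
    then have "qmul (qcnj b) a = ((- l / m) * (norm a)^2) *\<^sub>R qone"
      by (simp add: qcnj_minus qmul_minus_left qcnj_scaleR qmul_scaleR_left qmul_cnj_left)
    then show ?thesis by (metis comm_real scaleR_minus_left)
  qed
next
  let ?X = "qmul (qcnj b) a" and ?Y = "qmul (qcnj c) a"
  assume C: "comm ?X ?Y"
  show "Dep a b c"
  proof (cases "?X$2 = 0 \<and> ?X$3 = 0 \<and> ?X$4 = 0")
    case True
    then have "?X = ?X$1 *\<^sub>R qone" using real_part by blast
    from solve_cnj[OF a this] have "b = (?X$1 / (norm a)^2) *\<^sub>R a" .
    then show ?thesis unfolding Dep_def
      by (intro exI[of _ "?X$1 / (norm a)^2"] exI[of _ "-1"] exI[of _ 0]) simp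
  next
    case False
    from C have "?X$3*?Y$4 = ?X$4*?Y$3" "?X$4*?Y$2 = ?X$2*?Y$4" "?X$2*?Y$3 = ?X$3*?Y$2"
      unfolding comm_c by auto
    from parallel3[OF False this] obtain t where
      t: "?Y$2 = t*?X$2" "?Y$3 = t*?X$3" "?Y$4 = t*?X$4" by blast
    have "qmul (qcnj (c - t *\<^sub>R b)) a = ?Y - t *\<^sub>R ?X"
      by (simp add: qcnj_diff qcnj_scaleR qmul_diff_left qmul_scaleR_left)
    also have "\<dots> = (?Y - t *\<^sub>R ?X)$1 *\<^sub>R qone"
      by (rule real_part) (use t in simp_all)
    finally have "c - t *\<^sub>R b = ((?Y - t *\<^sub>R ?X)$1 / (norm a)^2) *\<^sub>R a"
      by (rule solve_cnj[OF a])
    then show ?thesis unfolding Dep_def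
      by (intro exI[of _ "- ((?Y - t *\<^sub>R ?X)$1 / (norm a)^2)"] exI[of _ "-t"] exI[of _ 1])
        (simp add: algebra_simps)
  qed
qed

lemma core:
  assumes "a \<noteq> 0" "b \<noteq> 0" "c \<noteq> 0"
  shows "comm (qmul (qinv b) a) (qmul (qinv c) a) \<longleftrightarrow> Dep a b c"
proof -
  have "comm (qmul (qinv b) a) (qmul (qinv c) a) \<longleftrightarrow> comm (qmul (qcnj b) a) (qmul (qinv c) a)"
    unfolding qinv_def qmul_scaleR_left using assms by (intro comm_scale) simp
  also have "\<dots> \<longleftrightarrow> comm (qmul (qcnj b) a) (qmul (qcnj c) a)"
    unfolding qinv_def qmul_scaleR_left using assms by (subst comm_sym, subst comm_scale) (simp_all add: comm_sym)
  finally show ?thesis using core_cnj[OF assms(1)] by simp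
qed

lemma qcancel1: "a \<noteq> 0 \<Longrightarrow> qmul a (qmul (qinv a) z) = z"
  by (simp flip: qmul_assoc add: qinv_right)
lemma qcancel2: "a \<noteq> 0 \<Longrightarrow> qmul (qinv a) (qmul a z) = z"
  by (simp flip: qmul_assoc add: qinv_left)
lemma qmul_nz: "a \<noteq> 0 \<Longrightarrow> b \<noteq> 0 \<Longrightarrow> qmul a b \<noteq> 0"
  by (metis qmul_cancel_left qmul_zero(2))
lemma qinv_mul: "a \<noteq> 0 \<Longrightarrow> b \<noteq> 0 \<Longrightarrow> qinv (qmul a b) = qmul (qinv b) (qinv a)"
  by (rule qinv_unique[symmetric]) (simp add: qmul_assoc qcancel1 qinv_right)
lemma comm_inv2: "x \<noteq> 0 \<Longrightarrow> y \<noteq> 0 \<Longrightarrow> comm (qinv x) (qinv y) \<longleftrightarrow> comm x y"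
  by (metis comm_qinv comm_sym)
lemma comm_shift1: "comm (qone + x) (qone + y) \<longleftrightarrow> comm x y"
  by (simp add: comm_c)
lemma qinv_inj: "a \<noteq> 0 \<Longrightarrow> b \<noteq> 0 \<Longrightarrow> qinv a = qinv b \<Longrightarrow> a = b"
  by (metis qinv_qinv)

lemma Dep_swap12: "Dep a b c \<Longrightarrow> Dep b a c"
proof -
  assume "Dep a b c"
  then obtain l m n where "l \<noteq> 0 \<or> m \<noteq> 0 \<or> n \<noteq> 0" "l *\<^sub>R a + m *\<^sub>R b + n *\<^sub>R c = 0"
    unfolding Dep_def by blast
  then show ?thesis unfolding Dep_def
    by (intro exI[of _ m] exI[of _ l] exI[of _ n]) (auto simp: algebra_simps)
qed
lemma Dep_swap23: "Dep a b c \<Longrightarrow> Dep a c b"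
proof -
  assume "Dep a b c"
  then obtain l m n where "l \<noteq> 0 \<or> m \<noteq> 0 \<or> n \<noteq> 0" "l *\<^sub>R a + m *\<^sub>R b + n *\<^sub>R c = 0"
    unfolding Dep_def by blast
  then show ?thesis unfolding Dep_def
    by (intro exI[of _ l] exI[of _ n] exI[of _ m]) (auto simp: algebra_simps)
qed
lemma Dep_scale1: "r \<noteq> 0 \<Longrightarrow> Dep (r *\<^sub>R a) b c \<longleftrightarrow> Dep a b c"
proof
  assume r: "r \<noteq> 0"
  {
    assume "Dep (r *\<^sub>R a) b c"
    then obtain l m n where "l \<noteq> 0 \<or> m \<noteq> 0 \<or> n \<noteq> 0" "l *\<^sub>R (r *\<^sub>R a) + m *\<^sub>R b + n *\<^sub>R c = 0"
      unfolding Dep_def by blast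
    then show "Dep a b c" unfolding Dep_def using r
      by (intro exI[of _ "l*r"] exI[of _ m] exI[of _ n]) auto
  }
  {
    assume "Dep a b c"
    then obtain l m n where "l \<noteq> 0 \<or> m \<noteq> 0 \<or> n \<noteq> 0" "l *\<^sub>R a + m *\<^sub>R b + n *\<^sub>R c = 0"
      unfolding Dep_def by blast
    then show "Dep (r *\<^sub>R a) b c" unfolding Dep_def using r
      by (intro exI[of _ "l/r"] exI[of _ m] exI[of _ n]) auto
  }
qed
lemma Dep_neg1: "Dep (- a) b c \<longleftrightarrow> Dep a b c"
  using Dep_scale1[of "-1" a b c] by simp
lemma Dep_neg2: "Dep a (- b) c \<longleftrightarrow> Dep a b c"
  using Dep_neg1 Dep_swap12 by blast
lemma Dep_neg3: "Dep a b (- c) \<longleftrightarrow> Dep a b c"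
  using Dep_neg2 Dep_swap23 by blast
lemma Dep_cnj: "Dep (qcnj a) (qcnj b) (qcnj c) \<longleftrightarrow> Dep a b c"
proof -
  have "l *\<^sub>R qcnj a + m *\<^sub>R qcnj b + n *\<^sub>R qcnj c = qcnj (l *\<^sub>R a + m *\<^sub>R b + n *\<^sub>R c)" for l m n
    by (simp add: qcnj_add qcnj_scaleR)
  moreover have "qcnj x = 0 \<longleftrightarrow> x = 0" for x by (metis qcnj_qcnj qcnj_zero)
  ultimately show ?thesis unfolding Dep_def by simp
qed
lemma Dep_base: "Dep (q - p) (r - p) (s - p) \<Longrightarrow> Dep (p - q) (r - q) (s - q)"
proof -
  assume "Dep (q - p) (r - p) (s - p)"
  then obtain l m n where nz: "l \<noteq> 0 \<or> m \<noteq> 0 \<or> n \<noteq> 0" and e: "l *\<^sub>R (q - p) + m *\<^sub>R (r - p) + n *\<^sub>R (s - p) = 0"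
    unfolding Dep_def by blast
  have "(-l-m-n) *\<^sub>R (p - q) + m *\<^sub>R (r - q) + n *\<^sub>R (s - q) = l *\<^sub>R (q - p) + m *\<^sub>R (r - p) + n *\<^sub>R (s - p)"
    by (simp add: algebra_simps)
  then show ?thesis unfolding Dep_def using nz e
    by (intro exI[of _ "-l-m-n"] exI[of _ m] exI[of _ n]) auto
qed

lemma span2_ex: "x \<in> span {y, z} \<Longrightarrow> \<exists>k t. x = k *\<^sub>R y + t *\<^sub>R z"
proof -
  assume "x \<in> span {y, z}"
  then obtain k where "x - k *\<^sub>R y \<in> span {z}" by (auto simp: span_insert)
  then obtain t where "x - k *\<^sub>R y = t *\<^sub>R z" by (auto simp: span_singleton)
  then have "x = k *\<^sub>R y + t *\<^sub>R z" by (simp add: algebra_simps)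
  then show ?thesis by blast
qed

lemma Dep_dim_aux: fixes a b c :: quat
  assumes "n \<noteq> 0" "l *\<^sub>R a + m *\<^sub>R b + n *\<^sub>R c = 0"
  shows "dim {a, b, c} \<le> 2"
proof -
  have "c = (- l / n) *\<^sub>R a + (- m / n) *\<^sub>R b" by (rule solve_lin[OF assms(2,1)])
  moreover have "(- l / n) *\<^sub>R a + (- m / n) *\<^sub>R b \<in> span {a, b}"
    by (intro span_add span_scale span_base) auto
  ultimately have "c \<in> span {a, b}" by simp
  then have "{a, b, c} \<subseteq> span {a, b}" by (auto intro: span_base)
  then have "dim {a, b, c} \<le> card {a, b}" by (rule dim_le_card) simp
  also have "card {a, b} \<le> 2" by (simp add: card_insert_if)
  finally show ?thesis .
qed

lemma Dep_dim: "Dep a b c \<longleftrightarrow> dim {a, b, c} \<le> 2"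
proof
  assume "Dep a b c"
  then obtain l m n where nz: "l \<noteq> 0 \<or> m \<noteq> 0 \<or> n \<noteq> 0" and e: "l *\<^sub>R a + m *\<^sub>R b + n *\<^sub>R c = 0"
    unfolding Dep_def by blast
  consider "n \<noteq> 0" | "m \<noteq> 0" | "l \<noteq> 0" using nz by blast
  then show "dim {a, b, c} \<le> 2"
  proof cases
    case 1 then show ?thesis using Dep_dim_aux e by blast
  next
    case 2
    have "l *\<^sub>R a + n *\<^sub>R c + m *\<^sub>R b = 0" using e by (simp add: algebra_simps)
    from Dep_dim_aux[OF 2 this] show ?thesis by (simp add: insert_commute)
  next
    case 3
    have "m *\<^sub>R b + n *\<^sub>R c + l *\<^sub>R a = 0" using e by (simp add: algebra_simps)
    from Dep_dim_aux[OF 3 this] show ?thesis by (simp add: insert_commute)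
  qed
next
  assume d: "dim {a, b, c} \<le> 2"
  show "Dep a b c"
  proof (cases "a = b \<or> a = c \<or> b = c")
    case True
    then show ?thesis
    proof (elim disjE)
      assume "a = b" then show ?thesis unfolding Dep_def by (intro exI[of _ 1] exI[of _ "-1"] exI[of _ 0]) simp
    next
      assume "a = c" then show ?thesis unfolding Dep_def by (intro exI[of _ 1] exI[of _ 0] exI[of _ "-1"]) simp
    next
      assume "b = c" then show ?thesis unfolding Dep_def by (intro exI[of _ 0] exI[of _ 1] exI[of _ "-1"]) simp
    qed
  next
    case False
    then have card: "card {a, b, c} = 3" by simp
    have "\<not> independent {a, b, c}"
    proof
      assume "independent {a, b, c}"
      then have "dim {a, b, c} = 3" using dim_eq_card_independent card by metis
      then show False using d by simp
    qed
    then obtain x where x: "x \<in> {a, b, c}" "x \<in> span ({a, b, c} - {x})"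
      unfolding dependent_def by blast
    show ?thesis
    proof -
      { assume "x = a"
        moreover have "{a, b, c} - {a} = {b, c}" using False by auto
        ultimately have "a \<in> span {b, c}" using x by simp
        then obtain k t where "a = k *\<^sub>R b + t *\<^sub>R c" using span2_ex by blast
        then have ?thesis unfolding Dep_def
          by (intro exI[of _ 1] exI[of _ "-k"] exI[of _ "-t"]) simp }
      moreover
      { assume "x = b"
        moreover have "{a, b, c} - {b} = {a, c}" using False by auto
        ultimately have "b \<in> span {a, c}" using x by simp
        then obtain k t where "b = k *\<^sub>R a + t *\<^sub>R c" using span2_ex by blast
        then have ?thesis unfolding Dep_def
          by (intro exI[of _ "-k"] exI[of _ 1] exI[of _ "-t"]) (simp add: algebra_simps) }
      moreover
      { assume "x = c"
        moreover have "{a, b, c} - {c} = {a, b}" using False by auto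
        ultimately have "c \<in> span {a, b}" using x by simp
        then obtain k t where "c = k *\<^sub>R a + t *\<^sub>R b" using span2_ex by blast
        then have ?thesis unfolding Dep_def
          by (intro exI[of _ "-k"] exI[of _ "-t"] exI[of _ 1]) (simp add: algebra_simps) }
      ultimately show ?thesis using x(1) by blast
    qed
  qed
qed

lemma L_sub: "subspace V \<Longrightarrow> a \<in> V \<Longrightarrow> b \<in> V \<Longrightarrow> c \<in> V \<Longrightarrow> dim V \<le> 2 \<Longrightarrow> Dep a b c"
  unfolding Dep_dim by (meson dim_subset empty_subsetI insert_subset order_trans)

lemma L3:
  fixes V :: "quat set"
  assumes V: "subspace V" "dim V \<le> 3" and c: "c \<in> V" "c \<noteq> 0"
    and abd: "a \<in> V" "b \<in> V" "d \<in> V" and o: "c \<bullet> a = 0" "c \<bullet> b = 0" "c \<bullet> d = 0"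
  shows "Dep a b d"
proof -
  have "c \<notin> span {a, b, d}"
  proof
    assume "c \<in> span {a, b, d}"
    then have "orthogonal c c"
      by (rule orthogonal_to_span) (use o in \<open>auto simp: orthogonal_def\<close>)
    then show False using c by (simp add: orthogonal_def)
  qed
  then have "dim (insert c {a, b, d}) = dim {a, b, d} + 1" by (simp add: dim_insert)
  moreover have "dim (insert c {a, b, d}) \<le> dim V"
    by (rule dim_subset) (use c abd in auto)
  ultimately show ?thesis unfolding Dep_dim using V by simp
qed

lemma L_ext:
  fixes a b c :: quat
  assumes "Dep a b c"
  shows "\<exists>V. subspace V \<and> dim V = 2 \<and> a \<in> V \<and> b \<in> V \<and> c \<in> V"
proof -
  obtain B where B: "B \<subseteq> {a, b, c}" "independent B" "{a, b, c} \<subseteq> span B" "card B = dim {a, b, c}"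
    using basis_exists by blast
  have cB: "card B \<le> 2" using B(4) assms Dep_dim by simp
  obtain C where C: "B \<subseteq> C" "C \<subseteq> UNIV" "independent C" "UNIV \<subseteq> span C"
    using maximal_independent_subset_extend[of B UNIV] B(2) by blast
  have fC: "finite C" using independent_bound C(3) by blast
  have "dim (UNIV :: quat set) \<le> dim (span C)" by (rule dim_subset) (use C(4) in auto)
  then have "card C \<ge> 2" using dim_span_eq_card_independent[OF C(3)] by simp
  then obtain T where T: "B \<subseteq> T" "T \<subseteq> C" "card T = 2"
    using exists_subset_between[OF cB _ C(1) fC] by blast
  have iT: "independent T" using C(3) T(2) independent_mono by blast
  show ?thesis
  proof (intro exI conjI)
    show "subspace (span T)" by simp
    show "dim (span T) = 2" using dim_span_eq_card_independent[OF iT] T(3) by simp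
    have "{a, b, c} \<subseteq> span T" using B(3) span_mono[OF T(1)] by blast
    then show "a \<in> span T" "b \<in> span T" "c \<in> span T" by auto
  qed
qed

lemma trans_mem: "(x::quat) \<in> (+) p ` V \<longleftrightarrow> x - p \<in> V"
proof
  assume "x \<in> (+) p ` V"
  then obtain u where "u \<in> V" "x = p + u" by auto
  then show "x - p \<in> V" by simp
next
  assume "x - p \<in> V"
  moreover have "x = p + (x - p)" by simp
  ultimately show "x \<in> (+) p ` V" by (rule rev_image_eqI)
qed

lemma affine_sub: assumes "affine P" "p \<in> P"
  shows "subspace ((\<lambda>x. x - p) ` P)" "aff_dim P = int (dim ((\<lambda>x. x - p) ` P))"
  by (rule affine_diffs_subspace_subtract[OF assms])
     (rule aff_dim_eq_dim_subtract, rule hull_inc[OF assms(2)])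

lemma G_plane: fixes p q r s :: quat
  shows "(\<exists>P. is_2plane P \<and> p \<in> P \<and> q \<in> P \<and> r \<in> P \<and> s \<in> P) \<longleftrightarrow> Dep (q - p) (r - p) (s - p)"
proof
  assume "\<exists>P. is_2plane P \<and> p \<in> P \<and> q \<in> P \<and> r \<in> P \<and> s \<in> P"
  then obtain P where P: "affine P" "aff_dim P = 2" "p \<in> P" "q \<in> P" "r \<in> P" "s \<in> P"
    unfolding is_2plane_def by blast
  let ?V = "(\<lambda>x. x - p) ` P"
  have V: "subspace ?V" "dim ?V = 2" using affine_sub[OF P(1,3)] P(2) by auto
  show "Dep (q - p) (r - p) (s - p)"
    by (rule L_sub[OF V(1)]) (use P V in auto)
next
  assume "Dep (q - p) (r - p) (s - p)"
  then obtain V where V: "subspace V" "dim V = 2" "q - p \<in> V" "r - p \<in> V" "s - p \<in> V"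
    using L_ext by blast
  show "\<exists>P. is_2plane P \<and> p \<in> P \<and> q \<in> P \<and> r \<in> P \<and> s \<in> P"
  proof -
    have pl: "is_2plane ((+) p ` V)" unfolding is_2plane_def
      using V(1,2) affine_translation[of V p] subspace_imp_affine[OF V(1)]
      by (simp add: aff_dim_translation_eq aff_dim_subspace)
    have m: "p \<in> (+) p ` V" "q \<in> (+) p ` V" "r \<in> (+) p ` V" "s \<in> (+) p ` V"
      unfolding trans_mem using V(3-5) subspace_0[OF V(1)] by simp_all
    show ?thesis by (intro exI[of _ "(+) p ` V"] conjI pl m)
  qed
qed

definition inv0 :: "quat \<Rightarrow> quat" where "inv0 y = (1 / (norm y)^2) *\<^sub>R y"

lemma inv0_back: "y \<noteq> 0 \<Longrightarrow> (norm y)^2 *\<^sub>R inv0 y = y"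
  by (simp add: inv0_def)
lemma inner_inv0: "c \<bullet> inv0 y = (c \<bullet> y) / (norm y)^2"
  by (simp add: inv0_def)
lemma qinv_inv0: "qinv y = qcnj (inv0 y)"
  by (simp add: qinv_def inv0_def qcnj_scaleR)

lemma sphere_eq: fixes c y :: quat
  shows "norm (c - y) = norm c \<longleftrightarrow> 2 * (c \<bullet> y) = (norm y)^2"
proof -
  have e: "(norm (c - y))^2 = (norm c)^2 - 2*(c \<bullet> y) + (norm y)^2"
    by (simp add: power2_norm_eq_inner inner_diff_left inner_diff_right inner_commute)
  have "norm (c - y) = norm c \<longleftrightarrow> (norm (c - y))^2 = (norm c)^2"
    by (metis norm_ge_zero power2_eq_imp_eq)
  then show ?thesis using e by auto
qed

lemma F_sphere:
  fixes x1 x2 x3 x4 x5 :: quat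
  assumes nz: "x2 \<noteq> x1" "x3 \<noteq> x1" "x4 \<noteq> x1" "x5 \<noteq> x1"
  defines "w2 \<equiv> inv0 (x2 - x1)" and "w3 \<equiv> inv0 (x3 - x1)" and "w4 \<equiv> inv0 (x4 - x1)" and "w5 \<equiv> inv0 (x5 - x1)"
  shows "((\<exists>S. is_2sphere S \<and> x1 \<in> S \<and> x2 \<in> S \<and> x3 \<in> S \<and> x4 \<in> S \<and> x5 \<in> S) \<or>
          (\<exists>P. is_2plane P \<and> x1 \<in> P \<and> x2 \<in> P \<and> x3 \<in> P \<and> x4 \<in> P \<and> x5 \<in> P))
         \<longleftrightarrow> Dep (w3 - w2) (w4 - w2) (w5 - w2)"
proof
  assume "(\<exists>S. is_2sphere S \<and> x1 \<in> S \<and> x2 \<in> S \<and> x3 \<in> S \<and> x4 \<in> S \<and> x5 \<in> S) \<or>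
          (\<exists>P. is_2plane P \<and> x1 \<in> P \<and> x2 \<in> P \<and> x3 \<in> P \<and> x4 \<in> P \<and> x5 \<in> P)"
  then show "Dep (w3 - w2) (w4 - w2) (w5 - w2)"
  proof
    assume "\<exists>S. is_2sphere S \<and> x1 \<in> S \<and> x2 \<in> S \<and> x3 \<in> S \<and> x4 \<in> S \<and> x5 \<in> S"
    then obtain S where S: "is_2sphere S" and Sm: "\<And>x. x \<in> {x1, x2, x3, x4, x5} \<Longrightarrow> x \<in> S"
      by auto
    then obtain A c r where A: "affine A" "aff_dim A = 3" "c \<in> A" "r > 0" and SA: "S = A \<inter> sphere c r"
      unfolding is_2sphere_def by blast
    have mem: "x \<in> A \<and> dist c x = r" if "x \<in> {x1, x2, x3, x4, x5}" for x
      using Sm[OF that] SA by auto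
    let ?V = "(\<lambda>x. x - x1) ` A"
    have V: "subspace ?V" "dim ?V = 3" using affine_sub[OF A(1)] mem[of x1] A(2) by auto
    let ?c = "c - x1"
    have cV: "?c \<in> ?V" using A(3) by auto
    have cn: "norm ?c = r" using mem[of x1] by (simp add: dist_norm)
    have key: "?c \<bullet> inv0 (x - x1) = 1/2 \<and> inv0 (x - x1) \<in> ?V" if "x \<in> {x2, x3, x4, x5}" for x
    proof
      have "x \<noteq> x1" using that nz by auto
      have "norm (?c - (x - x1)) = norm ?c" using mem[of x] that cn by (auto simp: dist_norm)
      then have "2 * (?c \<bullet> (x - x1)) = (norm (x - x1))^2" by (simp only: sphere_eq)
      then show "?c \<bullet> inv0 (x - x1) = 1/2" using \<open>x \<noteq> x1\<close> by (simp add: inner_inv0)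
      have "x - x1 \<in> ?V" using mem[of x] that by auto
      then show "inv0 (x - x1) \<in> ?V" unfolding inv0_def by (rule subspace_scale[OF V(1)])
    qed
    have k: "?c \<bullet> w = 1/2" "w \<in> ?V" if "w \<in> {w2, w3, w4, w5}" for w
      using that key by (auto simp: w2_def w3_def w4_def w5_def)
    show ?thesis
    proof (rule L3[OF V(1) _ cV])
      show "dim ?V \<le> 3" using V(2) by simp
      show "?c \<noteq> 0" using cn A(4) by auto
      show "w3 - w2 \<in> ?V" "w4 - w2 \<in> ?V" "w5 - w2 \<in> ?V" using k by (auto intro: subspace_diff[OF V(1)])
      show "?c \<bullet> (w3 - w2) = 0" "?c \<bullet> (w4 - w2) = 0" "?c \<bullet> (w5 - w2) = 0"
        using k[of w2] k[of w3] k[of w4] k[of w5] by (simp_all add: inner_diff_right)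
    qed
  next
    assume "\<exists>P. is_2plane P \<and> x1 \<in> P \<and> x2 \<in> P \<and> x3 \<in> P \<and> x4 \<in> P \<and> x5 \<in> P"
    then obtain P where P: "affine P" "aff_dim P = 2" and mem: "\<And>x. x \<in> {x1, x2, x3, x4, x5} \<Longrightarrow> x \<in> P"
      unfolding is_2plane_def by auto
    let ?V = "(\<lambda>x. x - x1) ` P"
    have V: "subspace ?V" "dim ?V = 2" using affine_sub[OF P(1)] mem[of x1] P(2) by auto
    have key: "inv0 (x - x1) \<in> ?V" if "x \<in> {x2, x3, x4, x5}" for x
    proof -
      have "x - x1 \<in> ?V" using mem[of x] that by auto
      then show "inv0 (x - x1) \<in> ?V" unfolding inv0_def by (rule subspace_scale[OF V(1)])
    qed
    show ?thesis
      by (rule L_sub[OF V(1)]) (use key V in \<open>auto simp: w2_def w3_def w4_def w5_def intro: subspace_diff\<close>)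
  qed
next
  assume "Dep (w3 - w2) (w4 - w2) (w5 - w2)"
  then obtain V where V: "subspace V" "dim V = 2" "w3 - w2 \<in> V" "w4 - w2 \<in> V" "w5 - w2 \<in> V"
    using L_ext by blast
  obtain v z where vz: "v \<in> span V" "\<And>u. u \<in> span V \<Longrightarrow> orthogonal z u" "w2 = v + z"
    by (rule orthogonal_subspace_decomp_exists[of V w2]) (rule that, auto)
  have sV: "span V = V" using V(1) by (simp add: span_eq_iff)
  have wdec: "w - z \<in> V" if "w \<in> {w2, w3, w4, w5}" for w
  proof -
    have e: "w - z = v + (w - w2)" using vz(3) by (simp add: algebra_simps)
    have "w - w2 \<in> V" using that V(3-5) subspace_0[OF V(1)] by (elim insertE) auto
    moreover have "v \<in> V" using vz(1) sV by simp
    ultimately have "v + (w - w2) \<in> V" using subspace_add[OF V(1)] by blast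
    then show ?thesis by (simp only: e)
  qed
  have ys: "(norm (x - x1))^2 *\<^sub>R inv0 (x - x1) = x - x1" if "x \<in> {x2, x3, x4, x5}" for x
    using that by (intro inv0_back) (use nz in auto)
  show "(\<exists>S. is_2sphere S \<and> x1 \<in> S \<and> x2 \<in> S \<and> x3 \<in> S \<and> x4 \<in> S \<and> x5 \<in> S) \<or>
          (\<exists>P. is_2plane P \<and> x1 \<in> P \<and> x2 \<in> P \<and> x3 \<in> P \<and> x4 \<in> P \<and> x5 \<in> P)"
  proof (cases "z = 0")
    case True
    have inV: "x - x1 \<in> V" if "x \<in> {x2, x3, x4, x5}" for x
    proof -
      have "inv0 (x - x1) \<in> V" using wdec[of "inv0 (x - x1)"] that True
        by (auto simp: w2_def w3_def w4_def w5_def)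
      then have "(norm (x - x1))^2 *\<^sub>R inv0 (x - x1) \<in> V" by (rule subspace_scale[OF V(1)])
      then show ?thesis using ys[OF that] by simp
    qed
    have pl: "is_2plane ((+) x1 ` V)" unfolding is_2plane_def
      using V(1,2) affine_translation[of V x1] subspace_imp_affine[OF V(1)]
      by (simp add: aff_dim_translation_eq aff_dim_subspace)
    have mems: "x \<in> (+) x1 ` V" if "x \<in> {x1, x2, x3, x4, x5}" for x
      using inV[of x] that subspace_0[OF V(1)] by (auto simp: trans_mem)
    have m: "x1 \<in> (+) x1 ` V" "x2 \<in> (+) x1 ` V" "x3 \<in> (+) x1 ` V" "x4 \<in> (+) x1 ` V" "x5 \<in> (+) x1 ` V"
      by (rule mems; simp)+
    show ?thesis
      by (rule disjI2, rule exI[of _ "(+) x1 ` V"], intro conjI pl m)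
  next
    case False
    let ?A0 = "span (insert z V)"
    have zV: "z \<notin> span V"
    proof
      assume "z \<in> span V"
      then have "orthogonal z z" using vz(2) by blast
      then show False using False by (simp add: orthogonal_def)
    qed
    have dA0: "dim ?A0 = 3" using zV V(2) by (simp add: dim_insert)
    define c0 where "c0 = (1 / (2 * (norm z)^2)) *\<^sub>R z"
    have c0A: "c0 \<in> ?A0" unfolding c0_def by (intro span_scale span_base) simp
    have c0n: "norm c0 > 0" using False by (simp add: c0_def)
    have inA: "x - x1 \<in> ?A0 \<and> norm (c0 - (x - x1)) = norm c0" if x: "x \<in> {x2, x3, x4, x5}" for x
    proof
      let ?w = "inv0 (x - x1)"
      have "?w \<in> {w2, w3, w4, w5}" using x by (auto simp: w2_def w3_def w4_def w5_def)
      then have wz: "?w - z \<in> V" by (rule wdec)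
      have "?w = z + (?w - z)" by simp
      moreover have "z + (?w - z) \<in> ?A0"
        using wz by (intro span_add span_base) (auto intro: span_mono[of V "insert z V", THEN subsetD] span_base)
      ultimately have wA: "?w \<in> ?A0" by simp
      show "x - x1 \<in> ?A0" using span_scale[OF wA, of "(norm (x - x1))^2"] ys[OF x] by simp
      have "z \<bullet> (?w - z) = 0" using vz(2)[of "?w - z"] wz sV by (simp add: orthogonal_def)
      then have zw: "z \<bullet> ?w = z \<bullet> z" by (simp add: inner_diff_right)
      have "x \<noteq> x1" using x nz by auto
      have "c0 \<bullet> (x - x1) = (1 / (2 * (norm z)^2)) * (z \<bullet> ((norm (x - x1))^2 *\<^sub>R ?w))"
        using ys[OF x] by (simp add: c0_def)
      also have "\<dots> = (norm (x - x1))^2 / 2"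
        using zw False by (simp add: power2_norm_eq_inner[symmetric])
      finally show "norm (c0 - (x - x1)) = norm c0" by (simp add: sphere_eq)
    qed
    let ?A = "(+) x1 ` ?A0"
    have sph: "is_2sphere (?A \<inter> sphere (x1 + c0) (norm c0))" unfolding is_2sphere_def
    proof (intro exI conjI)
      show "affine ?A" using affine_translation subspace_imp_affine[OF subspace_span[of "insert z V"]] by blast
      show "aff_dim ?A = 3" using dA0 by (simp add: aff_dim_translation_eq aff_dim_subspace)
      show "x1 + c0 \<in> ?A" using c0A by (simp add: trans_mem)
    qed (use c0n in auto)
    have mems: "x \<in> ?A \<inter> sphere (x1 + c0) (norm c0)" if "x \<in> {x1, x2, x3, x4, x5}" for x
    proof (cases "x = x1")
      case True then show ?thesis by (simp add: trans_mem span_zero dist_norm)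
    next
      case False
      then have "x \<in> {x2, x3, x4, x5}" using that by auto
      have e: "x1 + c0 - x = c0 - (x - x1)" by (simp add: algebra_simps)
      note i = inA[OF \<open>x \<in> {x2, x3, x4, x5}\<close>]
      have "x \<in> ?A" using i trans_mem by blast
      moreover have "dist (x1 + c0) x = norm c0" unfolding dist_norm e using i by blast
      ultimately show ?thesis by simp
    qed
    have m: "x1 \<in> ?A \<inter> sphere (x1 + c0) (norm c0)" "x2 \<in> ?A \<inter> sphere (x1 + c0) (norm c0)"
      "x3 \<in> ?A \<inter> sphere (x1 + c0) (norm c0)" "x4 \<in> ?A \<inter> sphere (x1 + c0) (norm c0)"
      "x5 \<in> ?A \<inter> sphere (x1 + c0) (norm c0)" by (rule mems; simp)+
    show ?thesis
      by (rule disjI1, rule exI[of _ "?A \<inter> sphere (x1 + c0) (norm c0)"], intro conjI sph m)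
  qed
qed

lemma qinv_ldiv: "a \<noteq> 0 \<Longrightarrow> b \<noteq> 0 \<Longrightarrow> qinv (qmul (qinv a) b) = qmul (qinv b) a"
  by (simp add: qinv_mul qinv_nz qinv_qinv)
lemma qinv_rdiv: "a \<noteq> 0 \<Longrightarrow> b \<noteq> 0 \<Longrightarrow> qinv (qmul a (qinv b)) = qmul b (qinv a)"
  by (simp add: qinv_mul qinv_nz qinv_qinv)

lemma comm_rdiv:
  assumes "d \<noteq> 0" "y \<noteq> 0" "y' \<noteq> 0"
  shows "comm (qmul d (qinv y)) (qmul d (qinv y')) \<longleftrightarrow> Dep d y y'"
proof -
  have e: "qmul (qmul (qinv d) (qmul d (qinv z))) (qinv (qinv d)) = qmul (qinv z) d" for z
    using assms(1) by (simp add: qinv_qinv qcancel2)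
  have "comm (qmul d (qinv y)) (qmul d (qinv y')) \<longleftrightarrow>
        comm (qmul (qmul (qinv d) (qmul d (qinv y))) (qinv (qinv d))) (qmul (qmul (qinv d) (qmul d (qinv y'))) (qinv (qinv d)))"
    using comm_conj[OF qinv_nz[OF assms(1)]] by simp
  also have "\<dots> \<longleftrightarrow> comm (qmul (qinv y) d) (qmul (qinv y') d)" by (simp only: e)
  also have "\<dots> \<longleftrightarrow> Dep d y y'" using core assms by blast
  finally show ?thesis .
qed

lemma CR1: assumes "x2 \<noteq> x3" "x4 \<noteq> x3" "x5 \<noteq> x3"
  shows "comm (qmul (qinv (x4 - x3)) (x2 - x3)) (qmul (qinv (x5 - x3)) (x2 - x3)) \<longleftrightarrow> Dep (x2 - x3) (x4 - x3) (x5 - x3)"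
  using core assms by simp

lemma CR3: assumes "x2 \<noteq> x1" "x4 \<noteq> x1" "x5 \<noteq> x1"
  shows "comm (qmul (qinv (x2 - x1)) (x4 - x1)) (qmul (qinv (x2 - x1)) (x5 - x1)) \<longleftrightarrow> Dep (x2 - x1) (x4 - x1) (x5 - x1)"
proof -
  have nz: "x2 - x1 \<noteq> 0" "x4 - x1 \<noteq> 0" "x5 - x1 \<noteq> 0" using assms by auto
  have "comm (qmul (qinv (x2 - x1)) (x4 - x1)) (qmul (qinv (x2 - x1)) (x5 - x1)) \<longleftrightarrow>
     comm (qinv (qmul (qinv (x2 - x1)) (x4 - x1))) (qinv (qmul (qinv (x2 - x1)) (x5 - x1)))"
    using nz by (simp add: comm_inv2 qmul_nz qinv_nz)
  also have "\<dots> \<longleftrightarrow> comm (qmul (qinv (x4 - x1)) (x2 - x1)) (qmul (qinv (x5 - x1)) (x2 - x1))"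
    using nz by (simp add: qinv_ldiv)
  also have "\<dots> \<longleftrightarrow> Dep (x2 - x1) (x4 - x1) (x5 - x1)" using core nz by blast
  finally show ?thesis .
qed

lemma CR2: assumes "x3 \<noteq> x1" "x4 \<noteq> x1" "x5 \<noteq> x1" "x4 \<noteq> x3" "x5 \<noteq> x3"
  shows "comm (qmul (x4 - x1) (qinv (x4 - x3))) (qmul (x5 - x1) (qinv (x5 - x3))) \<longleftrightarrow> Dep (x3 - x1) (x4 - x1) (x5 - x1)"
proof -
  have nz: "x3 - x1 \<noteq> 0" "x4 - x1 \<noteq> 0" "x5 - x1 \<noteq> 0" "x4 - x3 \<noteq> 0" "x5 - x3 \<noteq> 0" "x1 - x3 \<noteq> 0" using assms by auto
  have r: "qinv (qmul (x - x1) (qinv (x - x3))) = qone + qmul (x1 - x3) (qinv (x - x1))" if "x \<noteq> x1" "x \<noteq> x3" for x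
  proof -
    have "qinv (qmul (x - x1) (qinv (x - x3))) = qmul (x - x3) (qinv (x - x1))"
      using that by (simp add: qinv_rdiv)
    also have "\<dots> = qmul ((x - x1) + (x1 - x3)) (qinv (x - x1))" by simp
    also have "\<dots> = qone + qmul (x1 - x3) (qinv (x - x1))"
      unfolding qmul_add_left using qinv_right[of "x - x1"] that by simp
    finally show ?thesis .
  qed
  have "comm (qmul (x4 - x1) (qinv (x4 - x3))) (qmul (x5 - x1) (qinv (x5 - x3))) \<longleftrightarrow>
     comm (qinv (qmul (x4 - x1) (qinv (x4 - x3)))) (qinv (qmul (x5 - x1) (qinv (x5 - x3))))"
    using nz by (simp add: comm_inv2 qmul_nz qinv_nz)
  also have "\<dots> \<longleftrightarrow> comm (qmul (x1 - x3) (qinv (x4 - x1))) (qmul (x1 - x3) (qinv (x5 - x1)))"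
    using assms by (simp add: r comm_shift1)
  also have "\<dots> \<longleftrightarrow> Dep (x1 - x3) (x4 - x1) (x5 - x1)" using comm_rdiv nz by blast
  also have "\<dots> \<longleftrightarrow> Dep (x3 - x1) (x4 - x1) (x5 - x1)"
    using Dep_neg1[of "x3 - x1"] by simp
  finally show ?thesis .
qed

lemma CR4: assumes "x2 \<noteq> x1" "x3 \<noteq> x1" "x5 \<noteq> x1" "x2 \<noteq> x3" "x5 \<noteq> x3"
  shows "comm (qmul (qinv (x2 - x1)) (x2 - x3)) (cross_ratio x1 x2 x3 x5) \<longleftrightarrow> Dep (x2 - x1) (x3 - x1) (x5 - x1)"
proof -
  define y2 y5 d where "y2 = x2 - x1" and "y5 = x5 - x1" and "d = x1 - x3"
  have nz: "y2 \<noteq> 0" "y5 \<noteq> 0" "d \<noteq> 0" "x5 - x3 \<noteq> 0" "x2 - x3 \<noteq> 0" using assms by (auto simp: y2_def y5_def d_def)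
  have e23: "x2 - x3 = y2 + d" and e53: "x5 - x3 = y5 + d" by (simp_all add: y2_def y5_def d_def)
  define Q4 where "Q4 = qmul (qinv y2) (x2 - x3)"
  define B where "B = qmul (qmul (qmul (qinv y2) y5) (qinv (x5 - x3))) y2"
  define C where "C = qmul (qmul (qmul (qinv y2) (x5 - x3)) (qinv y5)) y2"
  have Q4nz: "Q4 \<noteq> 0" using nz by (simp add: Q4_def qmul_nz qinv_nz)
  have Bnz: "B \<noteq> 0" using nz by (simp add: B_def qmul_nz qinv_nz)
  have cr: "cross_ratio x1 x2 x3 x5 = qmul B Q4"
    using nz by (simp add: cross_ratio_def B_def Q4_def y2_def y5_def qmul_assoc qcancel1)
  have BC: "qmul B C = qone"
    using nz by (simp add: B_def C_def qmul_assoc qcancel1 qcancel2 qinv_right qinv_left)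
  have iB: "qinv B = C" using qinv_unique[OF BC] by simp
  have C': "C = qone + qmul (qinv y2) (qmul (qmul d (qinv y5)) y2)"
    using nz by (simp add: C_def e53 qmul_assoc qmul_add_left qmul_add_right qcancel2 qinv_right qinv_left)
  have Q4': "Q4 = qone + qmul (qinv y2) d"
    using nz by (simp add: Q4_def e23 qmul_add_right qinv_left)
  have "comm (qmul (qinv y2) (x2 - x3)) (cross_ratio x1 x2 x3 x5) \<longleftrightarrow> comm Q4 B"
    unfolding cr Q4_def[symmetric] using comm_mul[OF Q4nz] by simp
  also have "\<dots> \<longleftrightarrow> comm Q4 C"
    using comm_qinv[OF Bnz] comm_sym iB by metis
  also have "\<dots> \<longleftrightarrow> comm (qmul (qinv y2) d) (qmul (qinv y2) (qmul (qmul d (qinv y5)) y2))"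
    unfolding C' Q4' comm_shift1 ..
  also have "\<dots> \<longleftrightarrow> comm (qmul (qmul y2 (qmul (qinv y2) d)) (qinv y2))
        (qmul (qmul y2 (qmul (qinv y2) (qmul (qmul d (qinv y5)) y2))) (qinv y2))"
    using comm_conj[OF nz(1)] by simp
  also have "\<dots> \<longleftrightarrow> comm (qmul d (qinv y2)) (qmul d (qinv y5))"
    using nz by (simp add: qcancel1 qmul_assoc qinv_right)
  also have "\<dots> \<longleftrightarrow> Dep d y2 y5" using comm_rdiv nz by blast
  also have "\<dots> \<longleftrightarrow> Dep (x3 - x1) y2 y5"
    using Dep_neg1[of "x3 - x1" y2 y5] by (simp add: d_def)
  also have "\<dots> \<longleftrightarrow> Dep y2 (x3 - x1) y5" using Dep_swap12 by blast
  finally show ?thesis by (simp add: y2_def y5_def)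
qed

lemma CRF_id:
  assumes nz: "y2 \<noteq> 0" "y3 \<noteq> 0" "y4 \<noteq> 0" and ds: "y2 \<noteq> y3" "y4 \<noteq> y3"
  shows "qmul (qmul (qmul (qinv y2) y4) (qinv (y4 - y3))) (y2 - y3)
       = qmul (qmul (qinv y2) (qmul (qinv (qinv y3 - qinv y4)) (qinv y3 - qinv y2))) (qinv (qinv y2))"
proof -
  have d34: "qinv y3 - qinv y4 \<noteq> 0" using qinv_inj nz ds by force
  have h1: "qmul (qinv y3) (y4 - y3) = qmul (qinv y3 - qinv y4) y4"
    using nz by (simp add: qmul_diff_left qmul_diff_right qinv_left)
  have h2: "qmul (qmul (qinv (qinv y3 - qinv y4)) (qinv y3)) (y4 - y3) = y4"
    by (simp add: qmul_assoc h1 qcancel2[OF d34])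
  have y43: "y4 - y3 \<noteq> 0" using ds by simp
  have h3: "qmul y4 (qinv (y4 - y3)) = qmul (qinv (qinv y3 - qinv y4)) (qinv y3)"
    using arg_cong[OF h2, of "\<lambda>z. qmul z (qinv (y4 - y3))"]
    by (simp add: qmul_assoc qinv_right[OF y43])
  have h4: "y2 - y3 = qmul y3 (qmul (qinv y3 - qinv y2) y2)"
    using nz by (simp add: qmul_diff_left qmul_diff_right qcancel1 qinv_left)
  have "qmul (qmul (qmul (qinv y2) y4) (qinv (y4 - y3))) (y2 - y3)
      = qmul (qinv y2) (qmul (qmul y4 (qinv (y4 - y3))) (y2 - y3))"
    by (simp add: qmul_assoc)
  also have "\<dots> = qmul (qinv y2) (qmul (qinv (qinv y3 - qinv y4)) (qmul (qinv y3) (qmul y3 (qmul (qinv y3 - qinv y2) y2))))"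
    by (simp only: h3 flip: h4) (simp add: qmul_assoc)
  also have "\<dots> = qmul (qmul (qinv y2) (qmul (qinv (qinv y3 - qinv y4)) (qinv y3 - qinv y2))) (qinv (qinv y2))"
    using nz by (simp add: qcancel2 qinv_qinv qmul_assoc)
  finally show ?thesis .
qed

lemma CRF:
  fixes x1 x2 x3 x4 x5 :: quat
  assumes d: "distinct [x1, x2, x3, x4, x5]"
  shows "comm (cross_ratio x1 x2 x3 x4) (cross_ratio x1 x2 x3 x5) \<longleftrightarrow>
         Dep (inv0 (x3 - x1) - inv0 (x2 - x1)) (inv0 (x4 - x1) - inv0 (x2 - x1)) (inv0 (x5 - x1) - inv0 (x2 - x1))"
proof -
  define y2 y3 y4 y5 where "y2 = x2 - x1" and "y3 = x3 - x1" and "y4 = x4 - x1" and "y5 = x5 - x1"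
  have nz: "y2 \<noteq> 0" "y3 \<noteq> 0" "y4 \<noteq> 0" "y5 \<noteq> 0" using d by (auto simp: y2_def y3_def y4_def y5_def)
  have ds: "y2 \<noteq> y3" "y4 \<noteq> y3" "y5 \<noteq> y3" using d by (auto simp: y2_def y3_def y4_def y5_def)
  define u2 u3 u4 u5 where "u2 = qinv y2" and "u3 = qinv y3" and "u4 = qinv y4" and "u5 = qinv y5"
  have ne: "u3 \<noteq> u" if "u = qinv y" "y \<noteq> 0" "y \<noteq> y3" for u y
  proof
    assume "u3 = u"
    then have "qinv y3 = qinv y" using that by (simp add: u3_def)
    then have "y3 = y" by (rule qinv_inj[OF nz(2) that(2)])
    then show False using that(3) by simp
  qed
  have unz: "u3 - u2 \<noteq> 0" "u3 - u4 \<noteq> 0" "u3 - u5 \<noteq> 0" "u2 \<noteq> 0"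
    using ne[OF u2_def nz(1)] ne[OF u4_def nz(3)] ne[OF u5_def nz(4)] ds qinv_nz[OF nz(1)]
    by (simp_all add: u2_def)
  have cr4: "cross_ratio x1 x2 x3 x4 = qmul (qmul u2 (qmul (qinv (u3 - u4)) (u3 - u2))) (qinv u2)"
  proof -
    have "cross_ratio x1 x2 x3 x4 = qmul (qmul (qmul (qinv y2) y4) (qinv (y4 - y3))) (y2 - y3)"
      by (simp add: cross_ratio_def y2_def y3_def y4_def)
    then show ?thesis using CRF_id[OF nz(1,2,3) ds(1,2)] by (simp add: u2_def u3_def u4_def)
  qed
  have cr5: "cross_ratio x1 x2 x3 x5 = qmul (qmul u2 (qmul (qinv (u3 - u5)) (u3 - u2))) (qinv u2)"
  proof -
    have "cross_ratio x1 x2 x3 x5 = qmul (qmul (qmul (qinv y2) y5) (qinv (y5 - y3))) (y2 - y3)"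
      by (simp add: cross_ratio_def y2_def y3_def y5_def)
    then show ?thesis using CRF_id[OF nz(1,2,4) ds(1,3)] by (simp add: u2_def u3_def u5_def)
  qed
  define w2 w3 w4 w5 where "w2 = inv0 y2" and "w3 = inv0 y3" and "w4 = inv0 y4" and "w5 = inv0 y5"
  have uw: "u2 = qcnj w2" "u3 = qcnj w3" "u4 = qcnj w4" "u5 = qcnj w5"
    by (simp_all add: u2_def u3_def u4_def u5_def w2_def w3_def w4_def w5_def qinv_inv0)
  have "comm (cross_ratio x1 x2 x3 x4) (cross_ratio x1 x2 x3 x5) \<longleftrightarrow>
        comm (qmul (qinv (u3 - u4)) (u3 - u2)) (qmul (qinv (u3 - u5)) (u3 - u2))"
    unfolding cr4 cr5 by (rule comm_conj[OF unz(4)])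
  also have "\<dots> \<longleftrightarrow> Dep (u3 - u2) (u3 - u4) (u3 - u5)" using core unz by blast
  also have "\<dots> \<longleftrightarrow> Dep (w3 - w2) (w3 - w4) (w3 - w5)"
    using Dep_cnj[of "w3 - w2" "w3 - w4" "w3 - w5"] by (simp add: uw qcnj_diff)
  also have "\<dots> \<longleftrightarrow> Dep (w2 - w3) (w4 - w3) (w5 - w3)"
    using Dep_neg1[of "w2 - w3" "w3 - w4" "w3 - w5"] Dep_neg2[of "w2 - w3" "w4 - w3" "w3 - w5"]
      Dep_neg3[of "w2 - w3" "w4 - w3" "w5 - w3"] by simp
  also have "\<dots> \<longleftrightarrow> Dep (w3 - w2) (w4 - w2) (w5 - w2)"
    using Dep_base[of w2 w3 w4 w5] Dep_base[of w3 w2 w4 w5] by blast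
  finally show ?thesis by (simp add: w2_def w3_def w4_def w5_def y2_def y3_def y4_def y5_def)
qed

lemma ON_none: "on_2sphere_or_2plane (insert None (Some ` F)) \<longleftrightarrow> (\<exists>P. is_2plane P \<and> F \<subseteq> P)"
  unfolding on_2sphere_or_2plane_def by auto

lemma ON_all: "on_2sphere_or_2plane (Some ` F) \<longleftrightarrow> (\<exists>S. is_2sphere S \<and> F \<subseteq> S) \<or> (\<exists>P. is_2plane P \<and> F \<subseteq> P)"
  unfolding on_2sphere_or_2plane_def by auto

lemma G_plane': fixes p q r s :: quat
  shows "(\<exists>P. is_2plane P \<and> {p, q, r, s} \<subseteq> P) \<longleftrightarrow> Dep (q - p) (r - p) (s - p)"
  using G_plane[of p q r s] by simp

theorem mainTheorem5:
  fixes q1 q2 q3 q4 q5 :: "quat option"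
  assumes "distinct [q1, q2, q3, q4, q5]"
  shows "on_2sphere_or_2plane {q1, q2, q3, q4, q5} \<longleftrightarrow>
         qmul (cross_ratio_ext q1 q2 q3 q4) (cross_ratio_ext q1 q2 q3 q5) =
         qmul (cross_ratio_ext q1 q2 q3 q5) (cross_ratio_ext q1 q2 q3 q4)"
proof -
  have cm: "qmul A B = qmul B A \<longleftrightarrow> comm A B" for A B by (simp add: comm_def)
  consider "q1 = None" | "q2 = None" | "q3 = None" | "q4 = None" | "q5 = None"
    | "q1 \<noteq> None" "q2 \<noteq> None" "q3 \<noteq> None" "q4 \<noteq> None" "q5 \<noteq> None" by blast
  then show ?thesis
  proof cases
    case 1
    then obtain x2 x3 x4 x5 where s: "q2 = Some x2" "q3 = Some x3" "q4 = Some x4" "q5 = Some x5"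
      using assms by (cases q2; cases q3; cases q4; cases q5) auto
    have d: "distinct [x2, x3, x4, x5]" using assms 1 s by auto
    have set: "{q1, q2, q3, q4, q5} = insert None (Some ` {x3, x2, x4, x5})" using 1 s by auto
    have cr: "comm (qmul (qinv (x4 - x3)) (x2 - x3)) (qmul (qinv (x5 - x3)) (x2 - x3)) \<longleftrightarrow> Dep (x2 - x3) (x4 - x3) (x5 - x3)"
      by (rule CR1) (use d in auto)
    show ?thesis unfolding cm set ON_none G_plane' using 1 s cr
      by (simp add: cross_ratio_ext_def cr)
  next
    case 2
    then obtain x1 x3 x4 x5 where s: "q1 = Some x1" "q3 = Some x3" "q4 = Some x4" "q5 = Some x5"
      using assms by (cases q1; cases q3; cases q4; cases q5) auto
    have d: "distinct [x1, x3, x4, x5]" using assms 2 s by auto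
    have set: "{q1, q2, q3, q4, q5} = insert None (Some ` {x1, x3, x4, x5})" using 2 s by auto
    have cr: "comm (qmul (x4 - x1) (qinv (x4 - x3))) (qmul (x5 - x1) (qinv (x5 - x3))) \<longleftrightarrow> Dep (x3 - x1) (x4 - x1) (x5 - x1)"
      by (rule CR2) (use d in auto)
    show ?thesis unfolding cm set ON_none G_plane' using 2 s cr
      by (simp add: cross_ratio_ext_def cr)
  next
    case 3
    then obtain x1 x2 x4 x5 where s: "q1 = Some x1" "q2 = Some x2" "q4 = Some x4" "q5 = Some x5"
      using assms by (cases q1; cases q2; cases q4; cases q5) auto
    have d: "distinct [x1, x2, x4, x5]" using assms 3 s by auto
    have set: "{q1, q2, q3, q4, q5} = insert None (Some ` {x1, x2, x4, x5})" using 3 s by auto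
    have cr: "comm (qmul (qinv (x2 - x1)) (x4 - x1)) (qmul (qinv (x2 - x1)) (x5 - x1)) \<longleftrightarrow> Dep (x2 - x1) (x4 - x1) (x5 - x1)"
      by (rule CR3) (use d in auto)
    show ?thesis unfolding cm set ON_none G_plane' using 3 s cr
      by (simp add: cross_ratio_ext_def cr)
  next
    case 4
    then obtain x1 x2 x3 x5 where s: "q1 = Some x1" "q2 = Some x2" "q3 = Some x3" "q5 = Some x5"
      using assms by (cases q1; cases q2; cases q3; cases q5) auto
    have d: "distinct [x1, x2, x3, x5]" using assms 4 s by auto
    have set: "{q1, q2, q3, q4, q5} = insert None (Some ` {x1, x2, x3, x5})" using 4 s by auto
    have cr: "comm (qmul (qinv (x2 - x1)) (x2 - x3)) (cross_ratio x1 x2 x3 x5) \<longleftrightarrow> Dep (x2 - x1) (x3 - x1) (x5 - x1)"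
      by (rule CR4) (use d in auto)
    show ?thesis unfolding cm set ON_none G_plane' using 4 s cr
      by (simp add: cross_ratio_ext_def cr)
  next
    case 5
    then obtain x1 x2 x3 x4 where s: "q1 = Some x1" "q2 = Some x2" "q3 = Some x3" "q4 = Some x4"
      using assms by (cases q1; cases q2; cases q3; cases q4) auto
    have d: "distinct [x1, x2, x3, x4]" using assms 5 s by auto
    have set: "{q1, q2, q3, q4, q5} = insert None (Some ` {x1, x2, x3, x4})" using 5 s by auto
    have cr: "comm (cross_ratio x1 x2 x3 x4) (qmul (qinv (x2 - x1)) (x2 - x3)) \<longleftrightarrow> Dep (x2 - x1) (x3 - x1) (x4 - x1)"
      by (subst comm_sym, rule CR4) (use d in auto)
    show ?thesis unfolding cm set ON_none G_plane' using 5 s cr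
      by (simp add: cross_ratio_ext_def cr)
  next
    case 6
    then obtain x1 x2 x3 x4 x5 where s: "q1 = Some x1" "q2 = Some x2" "q3 = Some x3" "q4 = Some x4" "q5 = Some x5"
      by (cases q1; cases q2; cases q3; cases q4; cases q5) auto
    have d: "distinct [x1, x2, x3, x4, x5]" using assms s by auto
    have set: "{q1, q2, q3, q4, q5} = Some ` {x1, x2, x3, x4, x5}" using s by auto
    have cr: "cross_ratio_ext q1 q2 q3 q4 = cross_ratio x1 x2 x3 x4"
      "cross_ratio_ext q1 q2 q3 q5 = cross_ratio x1 x2 x3 x5"
      using s by (simp_all add: cross_ratio_ext_def)
    have F: "((\<exists>S. is_2sphere S \<and> x1 \<in> S \<and> x2 \<in> S \<and> x3 \<in> S \<and> x4 \<in> S \<and> x5 \<in> S) \<or>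
          (\<exists>P. is_2plane P \<and> x1 \<in> P \<and> x2 \<in> P \<and> x3 \<in> P \<and> x4 \<in> P \<and> x5 \<in> P))
         \<longleftrightarrow> Dep (inv0 (x3 - x1) - inv0 (x2 - x1)) (inv0 (x4 - x1) - inv0 (x2 - x1)) (inv0 (x5 - x1) - inv0 (x2 - x1))"
      by (rule F_sphere) (use d in auto)
    show ?thesis unfolding cm set ON_all cr CRF[OF d] F[symmetric] by simp
  qed
qed

end
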